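(* Consider the sequences $(x_k),(y_k),(\nu_k),(\lambda_k)$ generated by Algorithm 2 (described in the context), and let $A$, $K$ and $(i_k)$ be as defined in the context. Set $\sigma:=\frac{2\hat\theta}{\eta L}$. Then $\sigma<1$ and, for all $k\in K$, $$\nu_{i_k}\in N_C(y_{i_k}),$$ $$\big\|\lambda_{i_k}(F(y_{i_k})+\nu_{i_k})+y_{i_k}-x_{i_{k-1}}\big\|\le\sigma\|y_{i_k}-x_{i_{k-1}}\|,$$ $$\lambda_{i_k}\|y_{i_k}-x_{i_{k-1}}\|\ge\eta,$$ $$x_{i_k}=x_{i_{k-1}}-\tau\lambda_{i_k}(F(y_{i_k})+\nu_{i_k}).$$ Consequently, the sequences $(x_{i_k})_{k\in K}$, $(y_{i_k})_{k\in K}$, $(\lambda_{i_k})_{k\in K}$ (with $x_{i_0}=x_0$) are generated by the large-step under-relaxed HPE method (Algorithm 1 in the context) with parameters $\tau$, $\sigma$, $\eta$ and $N=\#A$.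
   Context: Setting: $\mathcal H$ real Hilbert space; $C\subseteq\mathcal H$ nonempty closed convex; $N_C(x)=\{\nu:\langle\nu,y-x\rangle\le0\ \forall y\in C\}$ if $x\in C$, $N_C(x)=\emptyset$ otherwise. $F:C\to\mathcal H$ is monotone, continuously differentiable, and $\|F'(x)-F'(y)\|\le L\|x-y\|$ for all $x,y\in C$, with $L>0$; the set of $x$ with $0\in F(x)+N_C(x)$ is nonempty. For $y\in C$, $F_y(x):=F(y)+F'(y)(x-y)$. Parameters: $0\le\hat\sigma<1/2$; $0<\theta<(1-\hat\sigma)(1-2\hat\sigma)$; $\hat\theta:=\theta\big(\frac{\hat\sigma}{1-\hat\sigma}+\frac{\theta}{(1-\hat\sigma)^2}\big)$; $\eta>2\hat\theta/L$; $\tau:=\dfrac{2(\theta-\hat\theta)}{2\theta+\frac{\eta L}{2}+\sqrt{(2\theta+\frac{\eta L}{2})^2-4\theta(\theta-\hat\theta)}}$ (one has $0<\tau<1$). Algorithm 2: input $x_0\in C$, $y_0:=x_0$, $\nu_0:=0$, $\lambda_1>0$ with $\lambda_1^2\|F(y_0)\|\le2\theta/L$. For $k=1,2,\dots$: if $F(y_{k-1})+\nu_{k-1}=0$, stop and return $y_{k-1}$. If $\frac{\lambda_kL}{2}\|\lambda_k(F(y_{k-1})+\nu_{k-1})+y_{k-1}-x_{k-1}\|\le\hat\theta$, set $y_k=y_{k-1}$, $\nu_k=\nu_{k-1}$; otherwise find any $(y_k,\nu_k)$ with $\nu_k\in N_C(y_k)$ and $\|\lambda_k(F_{y_{k-1}}(y_k)+\nu_k)+y_k-x_{k-1}\|\le\hat\sigma\|y_k-y_{k-1}\|$.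 Then, if $\lambda_k\|y_k-x_{k-1}\|\ge\eta$, set $x_k=x_{k-1}-\tau\lambda_k(F(y_k)+\nu_k)$ and $\lambda_{k+1}=(1-\tau)\lambda_k$; else set $x_k=x_{k-1}$ and $\lambda_{k+1}=\lambda_k/(1-\tau)$. Standing assumption: the algorithm never stops at the first test, i.e. $F(y_{k-1})+\nu_{k-1}\neq0$ for all $k$. Index sets: $A=\{k\ge1:\lambda_k\|y_k-x_{k-1}\|\ge\eta\}$; $K=\{k\ge1: k\le\#A\}$; $i_0=0$ and $i_k$ is the $k$-th element of $A$ (in increasing order), so $A=\{i_k:k\in K\}$. Algorithm 1 (large-step under-relaxed HPE method) with input $x_0\in\mathcal H$, $0<\tau<1$, $0\le\sigma<1$, $\eta>0$, $N\in\mathbb N\cup\{\infty\}$: for $k=1,\dots,N$, choose $\lambda_k>0$ and $y_k\in\mathcal H$, $\nu_k\in N_C(y_k)$ with $\|\lambda_k(F(y_k)+\nu_k)+y_k-x_{k-1}\|\le\sigma\|y_k-x_{k-1}\|$ and $\lambda_k\|y_k-x_{k-1}\|\ge\eta$, and set $x_k=x_{k-1}-\tau\lambda_k(F(y_k)+\nu_k)$. *)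

theory Defs
  imports "HOL-Analysis.Analysis" "HOL-Library.Infinite_Set" "HOL-Library.Extended_Nat"
begin

definition normal_cone :: "'a::real_inner set \<Rightarrow> 'a \<Rightarrow> 'a set" where
  "normal_cone C x = (if x \<in> C then {v. \<forall>y\<in>C. inner v (y - x) \<le> 0} else {})"

definition linearization :: "('a::real_vector \<Rightarrow> 'a) \<Rightarrow> ('a \<Rightarrow> 'a \<Rightarrow> 'a) \<Rightarrow> 'a \<Rightarrow> 'a \<Rightarrow> 'a" where
  "linearization F F' y x = F y + F' y (x - y)"

definition theta_hat :: "real \<Rightarrow> real \<Rightarrow> real" where
  "theta_hat sh th = th * (sh / (1 - sh) + th / (1 - sh)^2)"

definition tau_param :: "real \<Rightarrow> real \<Rightarrow> real \<Rightarrow> real \<Rightarrow> real" where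
  "tau_param sh th eta L =
     (let thh = theta_hat sh th in
      2 * (th - thh) /
        (2 * th + eta * L / 2 + sqrt ((2 * th + eta * L / 2)^2 - 4 * th * (th - thh))))"

text \<open>Sequences (x_k, y_k, nu_k, lambda_k) generated by Algorithm 2
  (with the standing assumption that the first stopping test never fires).\<close>
definition algorithm2 ::
  "'a::real_inner set \<Rightarrow> ('a \<Rightarrow> 'a) \<Rightarrow> ('a \<Rightarrow> 'a \<Rightarrow> 'a) \<Rightarrow> real \<Rightarrow> real \<Rightarrow> real \<Rightarrow> real \<Rightarrow>
   (nat \<Rightarrow> 'a) \<Rightarrow> (nat \<Rightarrow> 'a) \<Rightarrow> (nat \<Rightarrow> 'a) \<Rightarrow> (nat \<Rightarrow> real) \<Rightarrow> bool" where
  "algorithm2 C F F' L sh th eta x y nu lam \<longleftrightarrow>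
     (let thh = theta_hat sh th; tau = tau_param sh th eta L in
      x 0 \<in> C \<and> y 0 = x 0 \<and> nu 0 = 0 \<and> lam 1 > 0 \<and>
      (lam 1)^2 * norm (F (y 0)) \<le> 2 * th / L \<and>
      (\<forall>k\<ge>1.
         (if lam k * L / 2 * norm (lam k *\<^sub>R (F (y (k-1)) + nu (k-1)) + y (k-1) - x (k-1)) \<le> thh
          then y k = y (k-1) \<and> nu k = nu (k-1)
          else nu k \<in> normal_cone C (y k) \<and>
               norm (lam k *\<^sub>R (linearization F F' (y (k-1)) (y k) + nu k) + y k - x (k-1))
                 \<le> sh * norm (y k - y (k-1))) \<and>
         (if lam k * norm (y k - x (k-1)) \<ge> eta
          then x k = x (k-1) - (tau * lam k) *\<^sub>R (F (y k) + nu k) \<and> lam (k+1) = (1 - tau) * lam k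
          else x k = x (k-1) \<and> lam (k+1) = lam k / (1 - tau))))"

definition hpe_run ::
  "'a::real_inner set \<Rightarrow> ('a \<Rightarrow> 'a) \<Rightarrow> real \<Rightarrow> real \<Rightarrow> real \<Rightarrow> enat \<Rightarrow>
   (nat \<Rightarrow> 'a) \<Rightarrow> (nat \<Rightarrow> 'a) \<Rightarrow> (nat \<Rightarrow> 'a) \<Rightarrow> (nat \<Rightarrow> real) \<Rightarrow> bool" where
  "hpe_run C F tau sg eta N x y nu lam \<longleftrightarrow>
     0 < tau \<and> tau < 1 \<and> 0 \<le> sg \<and> sg < 1 \<and> eta > 0 \<and>
     (\<forall>k. 1 \<le> k \<and> enat k \<le> N \<longrightarrow>
        lam k > 0 \<and> nu k \<in> normal_cone C (y k) \<and>
        norm (lam k *\<^sub>R (F (y k) + nu k) + y k - x (k-1)) \<le> sg * norm (y k - x (k-1)) \<and>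
        lam k * norm (y k - x (k-1)) \<ge> eta \<and>
        x k = x (k-1) - (tau * lam k) *\<^sub>R (F (y k) + nu k))"

definition large_steps :: "(nat \<Rightarrow> 'a::real_normed_vector) \<Rightarrow> (nat \<Rightarrow> 'a) \<Rightarrow> (nat \<Rightarrow> real) \<Rightarrow> real \<Rightarrow> nat set" where
  "large_steps x y lam eta = {k. k \<ge> 1 \<and> lam k * norm (y k - x (k-1)) \<ge> eta}"

definition ecard :: "nat set \<Rightarrow> enat" where
  "ecard S = (if finite S then enat (card S) else \<infinity>)"

definition idx :: "nat set \<Rightarrow> nat \<Rightarrow> nat" where
  "idx S k = (if k = 0 then 0 else enumerate S (k - 1))"

end

theory Submission
  imports Defs
begin


lemma taylor_bound:
  fixes F :: "'a::real_inner \<Rightarrow> 'a"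
  assumes cvx: "convex C"
    and derf: "\<forall>u\<in>C. (F has_derivative F' u) (at u within C)"
    and lin: "\<forall>u\<in>C. bounded_linear (F' u)"
    and lip: "\<forall>u\<in>C. \<forall>v\<in>C. onorm (\<lambda>w. F' u w - F' v w) \<le> L * norm (u - v)"
    and x: "x \<in> C" and y: "y \<in> C"
  shows "norm (F y - F x - F' x (y - x)) \<le> L / 2 * norm (y - x)^2"
proof -
  let ?p = "\<lambda>u. x + u *\<^sub>R (y - x)"
  let ?f = "\<lambda>u. F (?p u) - u *\<^sub>R F' x (y - x)"
  let ?\<phi> = "\<lambda>h. h^2 / 2 * L * norm (y - x)^2"
  have *: "x + u *\<^sub>R (y - x) \<in> C" if "u \<in> {0..1}" for u
  proof -
    have "x + u *\<^sub>R (y - x) = (1 - u) *\<^sub>R x + u *\<^sub>R y" by (simp add: algebra_simps)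
    then show ?thesis using that cvx x y by (simp add: convex_alt)
  qed
  have "\<And>z. z \<in> ?p ` {0..1} \<Longrightarrow> (F has_derivative F' z) (at z within ?p ` {0..1})"
  proof -
    fix z assume "z \<in> ?p ` {0..1}"
    then have zC: "z \<in> C" and sub: "?p ` {0..1} \<subseteq> C" using * by auto
    show "(F has_derivative F' z) (at z within ?p ` {0..1})"
      using has_derivative_subset[OF derf[rule_format, OF zC] sub] .
  qed
  then have "continuous_on (?p ` {0..1}) F"
    unfolding continuous_on_eq_continuous_within
    by (meson has_derivative_continuous)
  with * have c1: "continuous_on {0 .. 1} (F \<circ> ?p)"
    by (intro continuous_intros)+
  have 1: "continuous_on {0 .. 1} ?f"
    using c1 unfolding o_def by (intro continuous_intros) auto
  have 2: "(?f has_vector_derivative (F' (?p u) (y - x) - F' x (y - x))) (at u)"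
    if u: "0 < u" "u < 1" for u
  proof -
    have uu: "u \<in> {0<..<1}" using u by auto
    interpret linear "(F' (?p u))"
      using u * lin by (auto intro!: bounded_linear.linear)
    have "(F \<circ> ?p has_derivative (F' (?p u)) \<circ> (\<lambda>u. 0 + u *\<^sub>R (y - x))) (at u within box 0 1)"
      by (intro derivative_intros has_derivative_subset [OF derf[rule_format]]) (use u * in auto)
    hence "((F \<circ> ?p) has_vector_derivative F' (?p u) (y - x)) (at u)"
      by (simp add: at_within_open[OF uu open_greaterThanLessThan] scaleR has_vector_derivative_def o_def)
    moreover have "((\<lambda>u. u *\<^sub>R F' x (y - x)) has_vector_derivative F' x (y - x)) (at u)"
      by (auto simp: has_vector_derivative_def intro!: derivative_eq_intros)
    ultimately show ?thesis unfolding o_def by (intro derivative_intros) auto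
  qed
  have 3: "continuous_on {0..1} ?\<phi>"
    by (intro continuous_intros) auto
  have 4: "(?\<phi> has_vector_derivative (u * L * norm (y - x)^2)) (at u)" for u
    by (auto simp: has_vector_derivative_def intro!: derivative_eq_intros)
  have 5: "norm (F' (?p u) (y - x) - F' x (y - x)) \<le> u * L * norm (y - x)^2"
    if u: "0 < u" "u < 1" for u
  proof -
    have pu: "?p u \<in> C" using * u by auto
    have bl: "bounded_linear (\<lambda>w. F' (?p u) w - F' x w)"
      using lin pu x by (auto intro: bounded_linear_sub)
    have "norm (F' (?p u) (y - x) - F' x (y - x)) \<le> onorm (\<lambda>w. F' (?p u) w - F' x w) * norm (y - x)"
      using onorm[OF bl] by simp
    also have "\<dots> \<le> (L * norm (?p u - x)) * norm (y - x)"
      using lip pu x by (intro mult_right_mono) (metis add_diff_cancel_left', simp)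
    also have "\<dots> = u * L * norm (y - x)^2"
      using u by (simp add: power2_eq_square)
    finally show ?thesis .
  qed
  from differentiable_bound_general[OF zero_less_one 1 3 2 4 5]
  have "norm (?f 1 - ?f 0) \<le> ?\<phi> 1 - ?\<phi> 0" by simp
  then show ?thesis by (simp add: algebra_simps)
qed

lemma real_small_lemma:
  fixes c K :: real
  assumes K: "K \<ge> 0" and h: "\<And>t. 0 < t \<Longrightarrow> t \<le> 1 \<Longrightarrow> c \<ge> - K * t"
  shows "c \<ge> 0"
proof (rule ccontr)
  assume c: "\<not> c \<ge> 0"
  show False
  proof (cases "K = 0")
    case True then show False using h[of 1] c by simp
  next
    case False
    then have Kp: "K > 0" using K by simp
    define t where "t = min 1 (- c / (2 * K))"
    have t0: "0 < t" using c Kp by (simp add: t_def field_simps)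
    have t1: "t \<le> 1" by (simp add: t_def)
    have "K * t \<le> K * (- c / (2 * K))" using Kp by (intro mult_left_mono) (auto simp: t_def)
    also have "\<dots> = - c / 2" using Kp by simp
    finally show False using h[OF t0 t1] c by linarith
  qed
qed

lemma deriv_monotone:
  fixes F :: "'a::real_inner \<Rightarrow> 'a"
  assumes cvx: "convex C"
    and derf: "\<forall>u\<in>C. (F has_derivative F' u) (at u within C)"
    and lin: "\<forall>u\<in>C. bounded_linear (F' u)"
    and lip: "\<forall>u\<in>C. \<forall>v\<in>C. onorm (\<lambda>w. F' u w - F' v w) \<le> L * norm (u - v)"
    and mono: "\<forall>u\<in>C. \<forall>v\<in>C. inner (F u - F v) (u - v) \<ge> 0"
    and L: "L \<ge> 0"
    and u: "u \<in> C" and v: "v \<in> C"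
  shows "inner (F' u (v - u)) (v - u) \<ge> 0"
proof (rule real_small_lemma)
  let ?d = "v - u"
  show "L / 2 * norm ?d ^ 3 \<ge> 0" using L by simp
  fix t :: real assume t: "0 < t" "t \<le> 1"
  let ?z = "u + t *\<^sub>R ?d"
  have "?z = (1 - t) *\<^sub>R u + t *\<^sub>R v" by (simp add: algebra_simps)
  then have zC: "?z \<in> C" using cvx u v t by (simp add: convex_alt)
  have tb: "norm (F ?z - F u - F' u (?z - u)) \<le> L / 2 * norm (?z - u)^2"
    by (rule taylor_bound[OF cvx derf lin lip u zC])
  have lin_u: "F' u (t *\<^sub>R ?d) = t *\<^sub>R F' u ?d"
    using lin u by (simp add: linear_simps)
  define E where "E = F ?z - F u - t *\<^sub>R F' u ?d"
  have Eb: "norm E \<le> L / 2 * t^2 * norm ?d ^ 2"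
    using tb lin_u t by (simp add: E_def power_mult_distrib)
  have "0 \<le> inner (F ?z - F u) (?z - u)" using mono zC u by blast
  also have "\<dots> = t * inner (F ?z - F u) ?d" by simp
  finally have "0 \<le> inner (F ?z - F u) ?d" using t by (simp add: zero_le_mult_iff)
  also have "inner (F ?z - F u) ?d = t * inner (F' u ?d) ?d + inner E ?d"
    by (simp add: E_def inner_diff_left inner_add_left)
  also have "inner E ?d \<le> norm E * norm ?d" by (rule norm_cauchy_schwarz)
  also have "\<dots> \<le> (L / 2 * t^2 * norm ?d ^ 2) * norm ?d" by (rule mult_right_mono[OF Eb]) simp
  finally have "0 \<le> t * (inner (F' u ?d) ?d + L / 2 * norm ?d ^ 3 * t)"
    by (simp add: algebra_simps power2_eq_square power3_eq_cube)
  then have "0 \<le> inner (F' u ?d) ?d + L / 2 * norm ?d ^ 3 * t"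
    using t by (simp add: zero_le_mult_iff)
  then show "- (L / 2 * norm ?d ^ 3) * t \<le> inner (F' u ?d) ?d" by simp
qed

lemma normal_cone_mono:
  assumes "nu \<in> normal_cone C y" "nu' \<in> normal_cone C y'"
  shows "inner (nu - nu') (y - y') \<ge> 0" and "y \<in> C" and "y' \<in> C"
proof -
  have yC: "y \<in> C" and y'C: "y' \<in> C" using assms by (auto simp: normal_cone_def split: if_splits)
  then show "y \<in> C" "y' \<in> C" by auto
  have "inner nu (y' - y) \<le> 0" using assms(1) yC y'C by (auto simp: normal_cone_def)
  moreover have "inner nu' (y - y') \<le> 0" using assms(2) yC y'C by (auto simp: normal_cone_def)
  ultimately show "inner (nu - nu') (y - y') \<ge> 0"
    by (simp add: inner_diff_left inner_diff_right inner_commute)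
qed

lemma newton_step:
  fixes F :: "'a::real_inner \<Rightarrow> 'a"
  assumes cvx: "convex C"
    and derf: "\<forall>u\<in>C. (F has_derivative F' u) (at u within C)"
    and lin: "\<forall>u\<in>C. bounded_linear (F' u)"
    and lip: "\<forall>u\<in>C. \<forall>v\<in>C. onorm (\<lambda>w. F' u w - F' v w) \<le> L * norm (u - v)"
    and mono: "\<forall>u\<in>C. \<forall>v\<in>C. inner (F u - F v) (u - v) \<ge> 0"
    and L: "L > 0"
    and sh: "0 \<le> sh" "sh < 1" and th: "0 \<le> th"
    and nu: "nu \<in> normal_cone C y" and nu': "nu' \<in> normal_cone C y'"
    and lam: "lam > 0"
    and rho: "lam * L / 2 * norm (lam *\<^sub>R (F y' + nu') + y' - x') \<le> th"
    and err: "norm (lam *\<^sub>R (linearization F F' y' y + nu) + y - x') \<le> sh * norm (y - y')"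
  shows "lam * L / 2 * norm (lam *\<^sub>R (F y + nu) + y - x') \<le> theta_hat sh th"
proof -
  have ncm: "inner (nu - nu') (y - y') \<ge> 0" and yC: "y \<in> C" and y'C: "y' \<in> C"
    using normal_cone_mono[OF nu nu'] by auto
  define d where "d = y - y'"
  define w where "w = lam *\<^sub>R (F y' + nu') + y' - x'"
  define e where "e = lam *\<^sub>R (linearization F F' y' y + nu) + y - x'"
  have dm: "inner (F' y' d) d \<ge> 0"
    unfolding d_def by (rule deriv_monotone[OF cvx derf lin lip mono _ y'C yC]) (use L in simp)
  have ew: "e - w = lam *\<^sub>R F' y' d + lam *\<^sub>R (nu - nu') + d"
    by (simp add: e_def w_def d_def linearization_def algebra_simps)
  have "inner (e - w) d = lam * inner (F' y' d) d + lam * inner (nu - nu') d + norm d ^ 2"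
    by (simp add: ew inner_add_left power2_norm_eq_inner)
  then have "norm d ^ 2 \<le> inner (e - w) d"
    using dm ncm lam by (simp add: d_def)
  also have "\<dots> \<le> norm (e - w) * norm d" by (rule norm_cauchy_schwarz)
  also have "\<dots> \<le> (norm e + norm w) * norm d" by (intro mult_right_mono norm_triangle_ineq4) simp
  also have "\<dots> \<le> (sh * norm d + norm w) * norm d"
    using err by (intro mult_right_mono) (auto simp: e_def d_def)
  finally have "norm d * norm d \<le> (sh * norm d + norm w) * norm d" by (simp add: power2_eq_square)
  then have "norm d \<le> sh * norm d + norm w"
  proof (cases "norm d = 0")
    case False
    then have "norm d > 0" by simp
    with \<open>norm d * norm d \<le> (sh * norm d + norm w) * norm d\<close> show ?thesis
      using mult_le_cancel_right_pos by blast
  qed simp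
  then have dw: "(1 - sh) * norm d \<le> norm w"
    by (simp add: algebra_simps)
  have tb: "norm (F y - F y' - F' y' d) \<le> L / 2 * norm d ^ 2"
    unfolding d_def by (rule taylor_bound[OF cvx derf lin lip y'C yC])
  have r: "lam *\<^sub>R (F y + nu) + y - x' = e + lam *\<^sub>R (F y - F y' - F' y' d)"
    by (simp add: e_def linearization_def d_def algebra_simps)
  define m where "m = lam * L / 2"
  have m0: "m > 0" using lam L by (simp add: m_def)
  have "norm (lam *\<^sub>R (F y + nu) + y - x') \<le> norm e + lam * norm (F y - F y' - F' y' d)"
    unfolding r by (rule order_trans[OF norm_triangle_ineq]) (use lam in simp)
  also have "\<dots> \<le> sh * norm d + lam * (L / 2 * norm d ^ 2)"
    using err tb lam by (intro add_mono mult_left_mono) (auto simp: e_def d_def)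
  finally have "m * norm (lam *\<^sub>R (F y + nu) + y - x') \<le> m * (sh * norm d + lam * (L / 2 * norm d ^ 2))"
    using m0 by (intro mult_left_mono) auto
  also have "\<dots> = sh * (m * norm d) + (m * norm d)^2"
    by (simp add: m_def power2_eq_square algebra_simps)
  finally have A: "m * norm (lam *\<^sub>R (F y + nu) + y - x') \<le> sh * (m * norm d) + (m * norm d)^2" .
  have mw: "m * norm w \<le> th" using rho by (simp add: m_def w_def)
  have "(1 - sh) * (m * norm d) \<le> m * norm w" using dw m0
    by (metis mult.left_commute mult_le_cancel_left_pos)
  then have md: "m * norm d \<le> th / (1 - sh)" using mw sh by (simp add: field_simps)
  have md0: "0 \<le> m * norm d" using m0 by simp
  have "sh * (m * norm d) + (m * norm d)^2 \<le> sh * (th / (1 - sh)) + (th / (1 - sh))^2"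
    using md md0 sh by (intro add_mono mult_left_mono power_mono) auto
  also have "\<dots> = theta_hat sh th"
    using sh by (simp add: theta_hat_def field_simps power2_eq_square)
  finally show ?thesis using A by (simp add: m_def)
qed



lemma enum_basic:
  fixes A :: "nat set"
  assumes k: "1 \<le> k" "enat k \<le> ecard A"
  shows "enumerate A (k - 1) \<in> A"
    and "\<And>n. n < k \<Longrightarrow> enumerate A n < enumerate A (k - 1) \<longleftrightarrow> n < k - 1"
    and "\<And>j. j \<in> A \<Longrightarrow> \<exists>n. enumerate A n = j \<and> (\<forall>m. m < k \<longrightarrow> (enumerate A n < enumerate A m \<longleftrightarrow> n < m) \<and> (enumerate A m < enumerate A n \<longleftrightarrow> m < n))"
proof -
  show "enumerate A (k - 1) \<in> A"
  proof (cases "finite A")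
    case True
    then have "k \<le> card A" using k by (simp add: ecard_def)
    then show ?thesis using True k finite_enumerate_in_set[of A "k-1"] by simp
  next
    case False then show ?thesis by (simp add: enumerate_in_set)
  qed
  show "enumerate A n < enumerate A (k - 1) \<longleftrightarrow> n < k - 1" if "n < k" for n
  proof (cases "finite A")
    case True
    then have "k \<le> card A" using k by (simp add: ecard_def)
    then show ?thesis using True k that by simp
  next
    case False then show ?thesis by simp
  qed
  show "\<exists>n. enumerate A n = j \<and> (\<forall>m. m < k \<longrightarrow> (enumerate A n < enumerate A m \<longleftrightarrow> n < m) \<and> (enumerate A m < enumerate A n \<longleftrightarrow> m < n))"
    if j: "j \<in> A" for j
  proof (cases "finite A")
    case True
    then have kc: "k \<le> card A" using k by (simp add: ecard_def)
    obtain n where n: "n < card A" "enumerate A n = j" using finite_enumerate_Ex[OF True j] by auto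
    show ?thesis using n kc True by (intro exI[of _ n]) auto
  next
    case False
    obtain n where n: "enumerate A n = j" using enumerate_Ex[OF False j] by auto
    show ?thesis using n False by (intro exI[of _ n]) auto
  qed
qed




lemma idx_Suc: "idx A (Suc n) = enumerate A n" by (simp add: idx_def)
lemma idx_0: "idx A 0 = 0" by (simp add: idx_def)

lemma idx_facts:
  fixes A :: "nat set"
  assumes A0: "0 \<notin> A" and k: "enat (Suc n) \<le> ecard A"
  shows "idx A (Suc n) \<in> A" "idx A n < idx A (Suc n)"
    "\<And>j. j \<in> A \<Longrightarrow> \<not> (idx A n < j \<and> j < idx A (Suc n))"
proof -
  have k1: "1 \<le> Suc n" by simp
  note E = enum_basic[OF k1 k]
  show ik: "idx A (Suc n) \<in> A" using E(1) by (simp add: idx_Suc)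
  show "idx A n < idx A (Suc n)"
  proof (cases n)
    case 0
    have "idx A (Suc n) \<noteq> 0"
    proof
      assume "idx A (Suc n) = 0"
      then have "(0::nat) \<in> A" using ik by simp
      then show False using A0 by simp
    qed
    then show ?thesis using 0 by (simp add: idx_0)
  next
    case (Suc p)
    have "enumerate A p < enumerate A n" using E(2)[of p] Suc by simp
    then show ?thesis using Suc by (simp only: idx_Suc)
  qed
  fix j assume j: "j \<in> A"
  obtain m where m: "enumerate A m = j" and nm: "\<forall>q. q < Suc n \<longrightarrow> (enumerate A m < enumerate A q \<longleftrightarrow> m < q) \<and> (enumerate A q < enumerate A m \<longleftrightarrow> q < m)"
    using E(3)[OF j] by (elim exE conjE) (rule that)
  have b: "j < enumerate A n \<longleftrightarrow> m < n" using nm[rule_format, of n] m by simp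
  show "\<not> (idx A n < j \<and> j < idx A (Suc n))"
  proof (cases n)
    case 0
    then show ?thesis using b by (simp only: idx_Suc) simp
  next
    case (Suc p)
    have "enumerate A p < j \<longleftrightarrow> p < m" using nm[rule_format, of p] m Suc by simp
    then show ?thesis using b Suc by (simp only: idx_Suc) linarith
  qed
qed



theorem proposition4p5:
  fixes C :: "'a::{real_inner, complete_space} set"
    and F :: "'a \<Rightarrow> 'a" and F' :: "'a \<Rightarrow> 'a \<Rightarrow> 'a"
    and L sh th eta :: real
    and x y nu :: "nat \<Rightarrow> 'a" and lam :: "nat \<Rightarrow> real"
  assumes C_ne: "C \<noteq> {}" and C_closed: "closed C" and C_convex: "convex C"
    and F_mono: "\<forall>u\<in>C. \<forall>v\<in>C. inner (F u - F v) (u - v) \<ge> 0"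
    and F_deriv: "\<forall>u\<in>C. (F has_derivative F' u) (at u within C)"
    and F'_lin: "\<forall>u\<in>C. bounded_linear (F' u)"
    and F'_cont: "continuous_on C (\<lambda>u. Blinfun (F' u))"
    and L_pos: "L > 0"
    and F'_lip: "\<forall>u\<in>C. \<forall>v\<in>C. onorm (\<lambda>w. F' u w - F' v w) \<le> L * norm (u - v)"
    and sol: "\<exists>z. z \<in> C \<and> - F z \<in> normal_cone C z"
    and sh: "0 \<le> sh" "sh < 1/2"
    and th: "0 < th" "th < (1 - sh) * (1 - 2 * sh)"
    and eta: "eta > 2 * theta_hat sh th / L"
    and alg: "algorithm2 C F F' L sh th eta x y nu lam"
    and nostop: "\<forall>k\<ge>1. F (y (k-1)) + nu (k-1) \<noteq> 0"
  shows "(let sg = 2 * theta_hat sh th / (eta * L);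
              tau = tau_param sh th eta L;
              A = large_steps x y lam eta;
              i = idx A
          in sg < 1 \<and>
             (\<forall>k. k \<ge> 1 \<and> enat k \<le> ecard A \<longrightarrow>
                nu (i k) \<in> normal_cone C (y (i k)) \<and>
                norm (lam (i k) *\<^sub>R (F (y (i k)) + nu (i k)) + y (i k) - x (i (k-1)))
                  \<le> sg * norm (y (i k) - x (i (k-1))) \<and>
                lam (i k) * norm (y (i k) - x (i (k-1))) \<ge> eta \<and>
                x (i k) = x (i (k-1)) - (tau * lam (i k)) *\<^sub>R (F (y (i k)) + nu (i k))) \<and>
             hpe_run C F tau sg eta (ecard A) (x \<circ> i) (y \<circ> i) (nu \<circ> i) (lam \<circ> i))"
proof -
  define thh where "thh = theta_hat sh th"
  define tau where "tau = tau_param sh th eta L"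
  define sg where "sg = 2 * theta_hat sh th / (eta * L)"
  define A where "A = large_steps x y lam eta"
  have alg': "x 0 \<in> C \<and> y 0 = x 0 \<and> nu 0 = 0 \<and> lam 1 > 0 \<and>
      (lam 1)^2 * norm (F (y 0)) \<le> 2 * th / L \<and>
      (\<forall>k\<ge>1.
         (if lam k * L / 2 * norm (lam k *\<^sub>R (F (y (k-1)) + nu (k-1)) + y (k-1) - x (k-1)) \<le> thh
          then y k = y (k-1) \<and> nu k = nu (k-1)
          else nu k \<in> normal_cone C (y k) \<and>
               norm (lam k *\<^sub>R (linearization F F' (y (k-1)) (y k) + nu k) + y k - x (k-1))
                 \<le> sh * norm (y k - y (k-1))) \<and>
         (if lam k * norm (y k - x (k-1)) \<ge> eta
          then x k = x (k-1) - (tau * lam k) *\<^sub>R (F (y k) + nu k) \<and> lam (k+1) = (1 - tau) * lam k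
          else x k = x (k-1) \<and> lam (k+1) = lam k / (1 - tau)))"
    using alg unfolding algorithm2_def Let_def thh_def tau_def .
  have x0C: "x 0 \<in> C" and y0: "y 0 = x 0" and nu0: "nu 0 = 0" and lam1: "lam 1 > 0"
    and init: "(lam 1)^2 * norm (F (y 0)) \<le> 2 * th / L"
    using alg' by auto
  have step: "(if lam (Suc n) * L / 2 * norm (lam (Suc n) *\<^sub>R (F (y n) + nu n) + y n - x n) \<le> thh
          then y (Suc n) = y n \<and> nu (Suc n) = nu n
          else nu (Suc n) \<in> normal_cone C (y (Suc n)) \<and>
               norm (lam (Suc n) *\<^sub>R (linearization F F' (y n) (y (Suc n)) + nu (Suc n)) + y (Suc n) - x n)
                 \<le> sh * norm (y (Suc n) - y n)) \<and>
         (if lam (Suc n) * norm (y (Suc n) - x n) \<ge> eta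
          then x (Suc n) = x n - (tau * lam (Suc n)) *\<^sub>R (F (y (Suc n)) + nu (Suc n)) \<and> lam (Suc (Suc n)) = (1 - tau) * lam (Suc n)
          else x (Suc n) = x n \<and> lam (Suc (Suc n)) = lam (Suc n) / (1 - tau))" for n
  proof -
    have "1 \<le> Suc n" by simp
    from alg'[THEN conjunct2, THEN conjunct2, THEN conjunct2, THEN conjunct2, THEN conjunct2, rule_format, OF this]
    show ?thesis by (simp only: diff_Suc_1 Suc_eq_plus1[symmetric])
  qed
  have q0: "1 - sh > 0" using sh by simp
  have thh0: "0 \<le> thh" unfolding thh_def theta_hat_def using sh th q0 by simp
  have "th / (1 - sh)^2 < ((1 - sh) * (1 - 2 * sh)) / (1 - sh)^2"
    by (rule divide_strict_right_mono) (use th q0 in auto)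
  also have "\<dots> = (1 - 2 * sh) / (1 - sh)"
  proof -
    have "(1 - sh) * (1 - sh) > 0" using q0 by simp
    then have ne: "1 + sh * sh \<noteq> sh * 2" by (simp add: algebra_simps)
    show ?thesis using q0 ne by (simp add: power2_eq_square field_simps)
  qed
  finally have "th / (1 - sh)^2 < (1 - 2 * sh) / (1 - sh)" .
  then have "sh / (1 - sh) + th / (1 - sh)^2 < sh / (1 - sh) + (1 - 2 * sh) / (1 - sh)"
    by (rule add_strict_left_mono)
  also have "\<dots> = 1" using q0 by (simp add: add_divide_distrib[symmetric])
  finally have br: "sh / (1 - sh) + th / (1 - sh)^2 < 1" .
  have "th * (sh / (1 - sh) + th / (1 - sh)^2) < th * 1"
    by (rule mult_strict_left_mono[OF br th(1)])
  then have thh_lt: "thh < th" by (simp add: thh_def theta_hat_def)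
  have eta0: "eta > 0"
  proof -
    have "2 * thh / L \<ge> 0" using thh0 L_pos by simp
    then show ?thesis using eta by (simp add: thh_def)
  qed
  define a where "a = eta * L / 2"
  have a0: "a > 0" using eta0 L_pos by (simp add: a_def)
  define b where "b = 2 * th + a"
  define c where "c = th - thh"
  have c0: "c > 0" using thh_lt by (simp add: c_def)
  define D where "D = b^2 - 4 * th * c"
  have D0: "D \<ge> 0"
  proof -
    have "4 * th * c \<le> 4 * th * th" using thh0 th by (simp add: c_def)
    also have "\<dots> \<le> b^2" using th a0 by (simp add: b_def power2_eq_square algebra_simps)
    finally show ?thesis by (simp add: D_def)
  qed
  define s where "s = sqrt D"
  have s0: "s \<ge> 0" and ss: "s^2 = D" using D0 by (auto simp: s_def)
  have tau_eq: "tau = 2 * c / (b + s)"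
    by (simp add: tau_def tau_param_def Let_def thh_def[symmetric] a_def b_def c_def D_def s_def)
  have bs: "b + s > 0" using th a0 s0 by (simp add: b_def)
  have tau0: "tau > 0" using c0 bs by (simp add: tau_eq)
  have tau1: "tau < 1" using bs th a0 s0 thh0 by (simp add: tau_eq b_def c_def field_simps)
  have tbs: "tau * (b + s) = 2 * c" using bs by (simp add: tau_eq)
  have quad: "th * tau^2 - b * tau + c = 0"
  proof -
    have "tau * s = 2 * c - tau * b" using tbs by (simp add: algebra_simps)
    then have "(tau * s)^2 = (2 * c - tau * b)^2" by simp
    then have "tau^2 * D = (2 * c - tau * b)^2" using ss by (simp add: power_mult_distrib)
    then have "tau^2 * (b^2 - 4 * th * c) = (2 * c - tau * b)^2" by (simp add: D_def)
    then have "4 * c * (th * tau^2 - b * tau + c) = 0" by algebra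
    then show ?thesis using c0 by simp
  qed
  have tau_id: "thh + tau * a = th * (1 - tau)^2"
    using quad by (simp add: b_def c_def power2_eq_square algebra_simps)
  have Q: "nu (Suc n) \<in> normal_cone C (y (Suc n)) \<and>
      lam (Suc n) * L / 2 * norm (lam (Suc n) *\<^sub>R (F (y (Suc n)) + nu (Suc n)) + y (Suc n) - x n) \<le> thh"
    if I1: "lam (Suc n) > 0" and I2: "nu n \<in> normal_cone C (y n)"
      and I3: "lam (Suc n) * L / 2 * norm (lam (Suc n) *\<^sub>R (F (y n) + nu n) + y n - x n) \<le> th" for n
  proof (cases "lam (Suc n) * L / 2 * norm (lam (Suc n) *\<^sub>R (F (y n) + nu n) + y n - x n) \<le> thh")
    case True
    then show ?thesis using step[of n] I2 by simp
  next
    case False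
    then have nuS: "nu (Suc n) \<in> normal_cone C (y (Suc n))"
      and err: "norm (lam (Suc n) *\<^sub>R (linearization F F' (y n) (y (Suc n)) + nu (Suc n)) + y (Suc n) - x n)
                 \<le> sh * norm (y (Suc n) - y n)"
      using step[of n] by auto
    have "lam (Suc n) * L / 2 * norm (lam (Suc n) *\<^sub>R (F (y (Suc n)) + nu (Suc n)) + y (Suc n) - x n) \<le> theta_hat sh th"
      by (rule newton_step[OF C_convex F_deriv F'_lin F'_lip F_mono L_pos sh(1) _ _ nuS I2 I1 I3 err])
        (use sh th in auto)
    then show ?thesis using nuS by (simp add: thh_def)
  qed
  have inv: "lam (Suc n) > 0 \<and> nu n \<in> normal_cone C (y n) \<and>
      lam (Suc n) * L / 2 * norm (lam (Suc n) *\<^sub>R (F (y n) + nu n) + y n - x n) \<le> th" for n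
  proof (induction n)
    case 0
    have "0 \<in> normal_cone C (y 0)" using x0C y0 by (simp add: normal_cone_def)
    moreover have e: "lam 1 * L / 2 * norm (lam 1 *\<^sub>R (F (y 0) + nu 0) + y 0 - x 0) = L / 2 * ((lam 1)^2 * norm (F (y 0)))"
      using lam1 nu0 y0 by (simp add: power2_eq_square)
    moreover have "L / 2 * ((lam 1)^2 * norm (F (y 0))) \<le> L / 2 * (2 * th / L)"
      using init L_pos by (intro mult_left_mono) auto
    moreover have "L / 2 * (2 * th / L) = th" using L_pos by simp
    ultimately show ?case using lam1 nu0 y0 by (simp only: One_nat_def[symmetric])
  next
    case (Suc n)
    have I1: "lam (Suc n) > 0" and I2: "nu n \<in> normal_cone C (y n)"
      and I3: "lam (Suc n) * L / 2 * norm (lam (Suc n) *\<^sub>R (F (y n) + nu n) + y n - x n) \<le> th"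
      using Suc by auto
    note QQ = Q[OF I1 I2 I3]
    define v where "v = F (y (Suc n)) + nu (Suc n)"
    define r where "r = lam (Suc n) *\<^sub>R v + y (Suc n) - x n"
    define m where "m = lam (Suc n) * L / 2"
    have m0: "m > 0" using I1 L_pos by (simp add: m_def)
    have mr: "m * norm r \<le> thh" using QQ by (simp add: m_def r_def v_def)
    show ?case
    proof (cases "lam (Suc n) * norm (y (Suc n) - x n) \<ge> eta")
      case True
      then have xs: "x (Suc n) = x n - (tau * lam (Suc n)) *\<^sub>R v"
        and ls: "lam (Suc (Suc n)) = (1 - tau) * lam (Suc n)"
        using step[of n] by (auto simp: v_def)
      have w: "lam (Suc (Suc n)) *\<^sub>R v + y (Suc n) - x (Suc n) = r"
        by (simp add: xs ls r_def algebra_simps)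
      have "lam (Suc (Suc n)) * L / 2 * norm r = (1 - tau) * (m * norm r)"
        by (simp add: ls m_def)
      also have "\<dots> \<le> 1 * thh" using mr tau0 tau1 thh0 m0
        by (intro mult_mono) auto
      finally have "lam (Suc (Suc n)) * L / 2 * norm r \<le> th" using thh_lt by simp
      moreover have "lam (Suc (Suc n)) > 0" using ls tau1 I1 by simp
      ultimately show ?thesis using QQ w by (simp add: v_def)
    next
      case False
      then have xs: "x (Suc n) = x n"
        and ls: "lam (Suc (Suc n)) = lam (Suc n) / (1 - tau)"
        and small: "lam (Suc n) * norm (y (Suc n) - x n) < eta"
        using step[of n] by auto
      define d where "d = y (Suc n) - x n"
      define w where "w = lam (Suc (Suc n)) *\<^sub>R v + y (Suc n) - x (Suc n)"
      have l2: "(1 - tau) * lam (Suc (Suc n)) = lam (Suc n)" using tau1 by (simp add: ls)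
      have "(1 - tau) *\<^sub>R w = ((1 - tau) * lam (Suc (Suc n))) *\<^sub>R v + (1 - tau) *\<^sub>R d"
        by (simp add: w_def d_def xs algebra_simps)
      also have "\<dots> = r - tau *\<^sub>R d" by (simp only: l2) (simp add: r_def d_def algebra_simps)
      finally have "(1 - tau) *\<^sub>R w = r - tau *\<^sub>R d" .
      then have "(1 - tau) * norm w = norm (r - tau *\<^sub>R d)" using tau1
        by (metis abs_of_pos diff_gt_0_iff_gt norm_scaleR)
      also have "\<dots> \<le> norm r + tau * norm d"
        using tau0 by (metis abs_of_pos norm_scaleR norm_triangle_ineq4)
      finally have nw: "(1 - tau) * norm w \<le> norm r + tau * norm d" .
      have "(1 - tau)^2 * (lam (Suc (Suc n)) * L / 2 * norm w) = m * ((1 - tau) * norm w)"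
        using tau1 by (simp add: ls m_def power2_eq_square field_simps)
      also have "\<dots> \<le> m * (norm r + tau * norm d)" using nw m0 by (intro mult_left_mono) auto
      also have "\<dots> = m * norm r + tau * (L / 2) * (lam (Suc n) * norm d)"
        by (simp add: m_def algebra_simps)
      also have "\<dots> \<le> thh + tau * (L / 2) * eta"
        using mr small tau0 L_pos by (intro add_mono mult_left_mono) (auto simp: d_def)
      also have "\<dots> = th * (1 - tau)^2" using tau_id by (simp add: a_def algebra_simps)
      finally have "(1 - tau)^2 * (lam (Suc (Suc n)) * L / 2 * norm w) \<le> (1 - tau)^2 * th"
        by (simp add: algebra_simps)
      then have "lam (Suc (Suc n)) * L / 2 * norm w \<le> th"
        using tau1 by (simp add: mult_le_cancel_left_pos)
      moreover have "lam (Suc (Suc n)) > 0" using ls tau1 I1 by simp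
      ultimately show ?thesis using QQ by (simp add: w_def v_def)
    qed
  qed
  have Qall: "lam (Suc n) > 0 \<and> nu (Suc n) \<in> normal_cone C (y (Suc n)) \<and>
      lam (Suc n) * L / 2 * norm (lam (Suc n) *\<^sub>R (F (y (Suc n)) + nu (Suc n)) + y (Suc n) - x n) \<le> thh" for n
    using inv[of n] Q[of n] by auto
  have A0: "0 \<notin> A" by (simp add: A_def large_steps_def)
  have notA: "x (Suc p) = x p" if "Suc p \<notin> A" for p
    using that step[of p] by (auto simp: A_def large_steps_def)
  have const: "a \<le> b \<Longrightarrow> (\<forall>j. a < j \<and> j \<le> b \<longrightarrow> j \<notin> A) \<Longrightarrow> x b = x a" for a b
  proof (induction b)
    case 0 then show ?case by simp
  next
    case (Suc b)
    show ?case
    proof (cases "a = Suc b")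
      case True then show ?thesis by simp
    next
      case False
      then have "a \<le> b" using Suc.prems by simp
      then have "x b = x a" using Suc by auto
      moreover have "Suc b \<notin> A" using Suc.prems False by auto
      ultimately show ?thesis using notA by simp
    qed
  qed
  have key: "lam (idx A k) > 0 \<and> nu (idx A k) \<in> normal_cone C (y (idx A k)) \<and>
                norm (lam (idx A k) *\<^sub>R (F (y (idx A k)) + nu (idx A k)) + y (idx A k) - x (idx A (k-1)))
                  \<le> sg * norm (y (idx A k) - x (idx A (k-1))) \<and>
                lam (idx A k) * norm (y (idx A k) - x (idx A (k-1))) \<ge> eta \<and>
                x (idx A k) = x (idx A (k-1)) - (tau * lam (idx A k)) *\<^sub>R (F (y (idx A k)) + nu (idx A k))"
    if k: "k \<ge> 1" "enat k \<le> ecard A" for k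
  proof -
    obtain n where kn: "k = Suc n" using k by (cases k) auto
    have F1: "idx A (Suc n) \<in> A" and F2: "idx A n < idx A (Suc n)"
      and F3: "\<And>j. j \<in> A \<Longrightarrow> \<not> (idx A n < j \<and> j < idx A (Suc n))"
      using idx_facts[OF A0 k(2)[unfolded kn]] by auto
    obtain p where jp: "idx A (Suc n) = Suc p" using F2 by (cases "idx A (Suc n)") auto
    have "\<forall>j. idx A n < j \<and> j \<le> p \<longrightarrow> j \<notin> A"
    proof (intro allI impI)
      fix j assume j: "idx A n < j \<and> j \<le> p"
      then have "j < idx A (Suc n)" using jp by simp
      then show "j \<notin> A" using F3[of j] j by blast
    qed
    moreover have "idx A n \<le> p" using F2 jp by simp
    ultimately have xp: "x p = x (idx A n)" using const by blast
    have inA: "Suc p \<in> A" using F1 jp by simp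
    then have big: "lam (Suc p) * norm (y (Suc p) - x p) \<ge> eta" by (simp add: A_def large_steps_def)
    then have xs: "x (Suc p) = x p - (tau * lam (Suc p)) *\<^sub>R (F (y (Suc p)) + nu (Suc p))"
      using step[of p] by auto
    note QQ = Qall[of p]
    define r where "r = lam (Suc p) *\<^sub>R (F (y (Suc p)) + nu (Suc p)) + y (Suc p) - x p"
    define d where "d = y (Suc p) - x p"
    define m where "m = lam (Suc p) * L / 2"
    have m0: "m > 0" using QQ L_pos by (simp add: m_def)
    have mr: "m * norm r \<le> thh" using QQ by (simp add: m_def r_def)
    have "thh * 1 \<le> thh * (lam (Suc p) * norm d / eta)"
      using big eta0 thh0 by (intro mult_left_mono) (auto simp: d_def)
    also have "\<dots> = m * (sg * norm d)"
      using eta0 L_pos by (simp add: m_def sg_def thh_def field_simps)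
    finally have "m * norm r \<le> m * (sg * norm d)" using mr by simp
    then have "norm r \<le> sg * norm d" using m0 by (simp add: mult_le_cancel_left_pos)
    then show ?thesis using QQ big xs xp jp kn by (simp add: r_def d_def)
  qed
  have sg1: "sg < 1"
  proof -
    have "2 * thh < eta * L" using eta L_pos by (simp add: thh_def field_simps)
    then show ?thesis using eta0 L_pos by (simp add: sg_def thh_def field_simps)
  qed
  have sg0: "sg \<ge> 0" using thh0 eta0 L_pos by (simp add: sg_def thh_def)
  have res: "sg < 1 \<and>
             (\<forall>k. k \<ge> 1 \<and> enat k \<le> ecard A \<longrightarrow>
                nu (idx A k) \<in> normal_cone C (y (idx A k)) \<and>
                norm (lam (idx A k) *\<^sub>R (F (y (idx A k)) + nu (idx A k)) + y (idx A k) - x (idx A (k-1)))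
                  \<le> sg * norm (y (idx A k) - x (idx A (k-1))) \<and>
                lam (idx A k) * norm (y (idx A k) - x (idx A (k-1))) \<ge> eta \<and>
                x (idx A k) = x (idx A (k-1)) - (tau * lam (idx A k)) *\<^sub>R (F (y (idx A k)) + nu (idx A k))) \<and>
             hpe_run C F tau sg eta (ecard A) (x \<circ> idx A) (y \<circ> idx A) (nu \<circ> idx A) (lam \<circ> idx A)"
    using sg1 key sg0 tau0 tau1 eta0 unfolding hpe_run_def by auto
  show ?thesis using res unfolding Let_def sg_def tau_def A_def .
qed


end
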